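(* Let $m\ge 1$ be odd and let $p$ be defined by $2p=3m+1$. Starting from the configuration with $m+1$ chips of one color, $m$ chips of each of the other two colors, no jokers and no dominoes, there is a sequence of Rule 1 exchanges only which produces $p-1$ dominoes.
   Context: Game model: a configuration is a tuple $(a,b,c,x,d)$ of nonnegative integers: $a,b,c$ colored chips of three colors, $x$ jokers, $d$ dominoes. Rule 1: remove three chips, consisting of some number $j\in\{0,1,2,3\}$ of jokers together with $3-j$ colored chips of pairwise distinct colors, and add one domino and one joker. *)

theory Defs
  imports Main
begin

text \<open>A configuration (a, b, c, x, d): a, b, c colored chips of the three colors,
  x jokers, d dominoes.\<close>
type_synonym config = "nat \<times> nat \<times> nat \<times> nat \<times> nat"

text \<open>Rule 1: remove j jokers (j in {0,1,2,3}) together with 3 - j colored chips of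
  pairwise distinct colors, and add one domino and one joker.\<close>
inductive rule1 :: "config \<Rightarrow> config \<Rightarrow> bool" where
  j0:   "rule1 (Suc a, Suc b, Suc c, x, d) (a, b, c, Suc x, Suc d)"
| j1ab: "rule1 (Suc a, Suc b, c, Suc x, d) (a, b, c, Suc x, Suc d)"
| j1ac: "rule1 (Suc a, b, Suc c, Suc x, d) (a, b, c, Suc x, Suc d)"
| j1bc: "rule1 (a, Suc b, Suc c, Suc x, d) (a, b, c, Suc x, Suc d)"
| j2a:  "rule1 (Suc a, b, c, Suc (Suc x), d) (a, b, c, Suc x, Suc d)"
| j2b:  "rule1 (a, Suc b, c, Suc (Suc x), d) (a, b, c, Suc x, Suc d)"
| j2c:  "rule1 (a, b, Suc c, Suc (Suc x), d) (a, b, c, Suc x, Suc d)"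
| j3:   "rule1 (a, b, c, Suc (Suc (Suc x)), d) (a, b, c, Suc x, Suc d)"

end

theory Submission
  imports Defs
begin

lemma rounds:
  "rule1\<^sup>*\<^sup>* (a + 2*n, b + 2*n, c + 2*n, Suc x, d) (a, b, c, Suc x, d + 3*n)"
proof (induction n arbitrary: d)
  case 0
  then show ?case by simp
next
  case (Suc n)
  have s1: "rule1 (Suc (Suc (a + 2*n)), Suc (Suc (b + 2*n)), Suc (Suc (c + 2*n)), Suc x, d)
                  (Suc (a + 2*n), Suc (b + 2*n), Suc (Suc (c + 2*n)), Suc x, Suc d)"
    by (rule rule1.j1ab)
  have s2: "rule1 (Suc (a + 2*n), Suc (b + 2*n), Suc (Suc (c + 2*n)), Suc x, Suc d)
                  (a + 2*n, Suc (b + 2*n), Suc (c + 2*n), Suc x, Suc (Suc d))"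
    by (rule rule1.j1ac)
  have s3: "rule1 (a + 2*n, Suc (b + 2*n), Suc (c + 2*n), Suc x, Suc (Suc d))
                  (a + 2*n, b + 2*n, c + 2*n, Suc x, Suc (Suc (Suc d)))"
    by (rule rule1.j1bc)
  have ih: "rule1\<^sup>*\<^sup>* (a + 2*n, b + 2*n, c + 2*n, Suc x, Suc (Suc (Suc d)))
                  (a, b, c, Suc x, Suc (Suc (Suc d)) + 3*n)" by (rule Suc.IH)
  have "rule1\<^sup>*\<^sup>* (Suc (Suc (a + 2*n)), Suc (Suc (b + 2*n)), Suc (Suc (c + 2*n)), Suc x, d)
                  (a, b, c, Suc x, Suc (Suc (Suc d)) + 3*n)"
    using s1 s2 s3 ih by (meson converse_rtranclp_into_rtranclp)
  moreover have "Suc (Suc (Suc d)) + 3*n = d + 3 * Suc n" by simp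
  ultimately show ?case by (simp add: numeral_eq_Suc)
qed

theorem mainTheorem3:
  fixes m p :: nat
  assumes "odd m" and "m \<ge> 1" and "2 * p = 3 * m + 1"
  shows "\<exists>a b c x. rule1\<^sup>*\<^sup>* (m + 1, m, m, 0, 0) (a, b, c, x, p - 1)"
proof -
  obtain k where m: "m = 2*k + 1" using assms(1) oddE by blast
  have p: "p - 1 = 1 + 3*k" using assms(3) m by simp
  have s0: "rule1 (Suc (1 + 2*k), Suc (0 + 2*k), Suc (0 + 2*k), 0, 0) (1 + 2*k, 0 + 2*k, 0 + 2*k, Suc 0, Suc 0)"
    by (rule rule1.j0)
  have r: "rule1\<^sup>*\<^sup>* (1 + 2*k, 0 + 2*k, 0 + 2*k, Suc 0, Suc 0) (1, 0, 0, Suc 0, Suc 0 + 3*k)"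
    by (rule rounds)
  have "rule1\<^sup>*\<^sup>* (Suc (1 + 2*k), Suc (0 + 2*k), Suc (0 + 2*k), 0, 0) (1, 0, 0, Suc 0, Suc 0 + 3*k)"
    using s0 r by (rule converse_rtranclp_into_rtranclp)
  then show ?thesis using m p by (intro exI) (simp add: add.commute)
qed

end
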